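(* Let $\delta\in(0,1]$, let $a_0\ge0$ and $a_1,a_2,\dots,a_T\ge0$, and let $f:[0,\infty)\to[0,\infty)$ be non-increasing. Then $$\sum_{t=1}^T\sum_{i=0}^{t-1}(1-\delta)^i\,a_{t-i:t}\,f(a_{0:t})\le\frac{1}{\delta^2}\int_{a_0}^{a_{0:T}}f(x)\,dx.$$
   Context: For a sequence $(a_s)$, $a_{m:n}=\sum_{s=m}^na_s$. *)

theory Defs
  imports "HOL-Analysis.Analysis"
begin

end

theory Submission
  imports Defs
begin

lemma geo_bound:
  fixes q d :: real
  assumes "0 \<le> q" "q = 1 - d" "0 < d" "finite K"
  shows "(\<Sum>k\<in>K. q ^ k) \<le> 1 / d"
proof -
  obtain N where N: "K \<subseteq> {..<N}"
    using assms(4) by (meson finite_nat_iff_bounded)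
  have "(\<Sum>k\<in>K. q ^ k) \<le> (\<Sum>k<N. q ^ k)"
    by (rule sum_mono2) (use N assms(1) in auto)
  moreover have "(\<Sum>k<N. q ^ k) * d = 1 - q ^ N" for N
    by (induction N) (auto simp: algebra_simps assms(2))
  moreover have "q ^ N \<ge> 0" using assms(1) by simp
  ultimately have "(\<Sum>k\<in>K. q ^ k) * d \<le> 1"
    by (smt (verit) assms(3) mult_right_mono)
  thus ?thesis using assms(3) by (simp add: field_simps)
qed

lemma geo_bound2:
  fixes q d :: real
  assumes "0 \<le> q" "q = 1 - d" "0 < d" "finite S" "inj_on h S"
  shows "(\<Sum>x\<in>S. q ^ h x) \<le> 1 / d"
proof -
  have "(\<Sum>x\<in>S. q ^ h x) = (\<Sum>k\<in>h ` S. q ^ k)"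
    using assms(5) by (simp add: sum.reindex)
  also have "\<dots> \<le> 1 / d" using geo_bound assms by auto
  finally show ?thesis .
qed

theorem lemma4:
  fixes \<delta> :: real and a :: "nat \<Rightarrow> real" and f :: "real \<Rightarrow> real" and T :: nat
  assumes "0 < \<delta>" and "\<delta> \<le> 1"
    and "\<And>s. s \<le> T \<Longrightarrow> a s \<ge> 0"
    and "\<And>x. x \<ge> 0 \<Longrightarrow> f x \<ge> 0"
    and "\<And>x y. 0 \<le> x \<Longrightarrow> x \<le> y \<Longrightarrow> f y \<le> f x"
  shows "(\<Sum>t=1..T. \<Sum>i=0..t-1. (1 - \<delta>) ^ i * (\<Sum>s=t-i..t. a s) * f (\<Sum>s=0..t. a s))
         \<le> (1 / \<delta>\<^sup>2) * integral {a 0..(\<Sum>s=0..T. a s)} f"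
proof -
  define q where "q = 1 - \<delta>"
  define A where "A t = (\<Sum>s=0..t. a s)" for t
  have q0: "0 \<le> q" using assms(2) q_def by simp
  have A0: "0 \<le> A t" if "t \<le> T" for t
    unfolding A_def using that assms(3) by (intro sum_nonneg) auto
  have Amono: "A s \<le> A t" if "s \<le> t" "t \<le> T" for s t
    unfolding A_def using that assms(3) by (intro sum_mono2) auto
  define c where "c s = a s * f (A s)" for s
  have c0: "0 \<le> c s" if "s \<le> T" for s
    unfolding c_def using that assms(3,4) A0 by auto
  have stepA: "(\<Sum>i=0..t-1. q ^ i * (\<Sum>s=t-i..t. a s) * f (A t))
      \<le> (\<Sum>s=1..t. (q ^ (t - s) / \<delta>) * c s)" if t1: "1 \<le> t" and tT: "t \<le> T" for t
  proof -
    have inner: "(\<Sum>s=t-i..t. a s) = (\<Sum>s\<in>{1..t}. if t - i \<le> s then a s else 0)"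
      if "i \<in> {0..t-1}" for i
    proof -
      have "{s\<in>{1..t}. t - i \<le> s} = {t-i..t}" using that t1 by auto
      thus ?thesis by (simp add: sum.inter_filter[symmetric])
    qed
    have "(\<Sum>i=0..t-1. q ^ i * (\<Sum>s=t-i..t. a s) * f (A t))
        = (\<Sum>i=0..t-1. \<Sum>s\<in>{1..t}. (if t - i \<le> s then q ^ i else 0) * a s * f (A t))"
      by (rule sum.cong) (auto simp: inner sum_distrib_left sum_distrib_right intro!: sum.cong)
    also have "\<dots> = (\<Sum>s\<in>{1..t}. (\<Sum>i=0..t-1. (if t - i \<le> s then q ^ i else 0)) * (a s * f (A t)))"
      by (subst sum.swap) (auto simp: sum_distrib_right intro!: sum.cong)
    also have "\<dots> \<le> (\<Sum>s=1..t. (q ^ (t - s) / \<delta>) * c s)"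
    proof (rule sum_mono)
      fix s assume s: "s \<in> {1..t}"
      have g: "(\<Sum>i=0..t-1. (if t - i \<le> s then q ^ i else 0)) \<le> q ^ (t - s) / \<delta>"
      proof -
        have "{i\<in>{0..t-1}. t - i \<le> s} = {t-s..t-1}" using s by auto
        hence "(\<Sum>i=0..t-1. (if t - i \<le> s then q ^ i else 0)) = (\<Sum>i=t-s..t-1. q ^ i)"
          by (simp add: sum.inter_filter[symmetric])
        also have "\<dots> = (\<Sum>i=t-s..t-1. q ^ (t - s) * q ^ (i - (t - s)))"
          by (rule sum.cong) (auto simp: power_add[symmetric])
        also have "\<dots> = q ^ (t - s) * (\<Sum>i=t-s..t-1. q ^ (i - (t - s)))"
          by (simp add: sum_distrib_left)
        also have "\<dots> \<le> q ^ (t - s) * (1 / \<delta>)"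
          by (intro mult_left_mono geo_bound2[OF q0 q_def assms(1)]) (auto simp: inj_on_def q0)
        finally show ?thesis by simp
      qed
      have as0: "0 \<le> a s" using s tT assms(3) by auto
      have "f (A t) \<le> f (A s)" using assms(5) A0 Amono s tT by auto
      hence "a s * f (A t) \<le> c s" unfolding c_def using as0 by (simp add: mult_left_mono)
      moreover have "0 \<le> a s * f (A t)" using as0 assms(4) A0 tT by auto
      moreover have "0 \<le> q ^ (t - s) / \<delta>" using q0 assms(1) by simp
      ultimately show "(\<Sum>i=0..t-1. (if t - i \<le> s then q ^ i else 0)) * (a s * f (A t))
          \<le> (q ^ (t - s) / \<delta>) * c s"
        using g by (meson mult_mono order_trans)
    qed
    finally show ?thesis .
  qed
  have stepB: "(\<Sum>t=1..T. \<Sum>s=1..t. (q ^ (t - s) / \<delta>) * c s) \<le> (1 / \<delta>\<^sup>2) * (\<Sum>s=1..T. c s)"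
  proof -
    have "(\<Sum>t=1..T. \<Sum>s=1..t. (q ^ (t - s) / \<delta>) * c s)
        = (\<Sum>t=1..T. \<Sum>s\<in>{1..T}. (if s \<le> t then q ^ (t - s) else 0) / \<delta> * c s)"
    proof (rule sum.cong)
      fix t assume t: "t \<in> {1..T}"
      have "{s\<in>{1..T}. s \<le> t} = {1..t}" using t by auto
      then show "(\<Sum>s=1..t. (q ^ (t - s) / \<delta>) * c s)
          = (\<Sum>s\<in>{1..T}. (if s \<le> t then q ^ (t - s) else 0) / \<delta> * c s)"
      proof -
        have "(\<Sum>s\<in>{1..T}. (if s \<le> t then q ^ (t - s) else 0) / \<delta> * c s)
            = (\<Sum>s\<in>{1..T}. if s \<le> t then (q ^ (t - s) / \<delta>) * c s else 0)"
          by (rule sum.cong) auto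
        also have "\<dots> = (\<Sum>s=1..t. (q ^ (t - s) / \<delta>) * c s)"
          using \<open>{s\<in>{1..T}. s \<le> t} = {1..t}\<close> by (simp add: sum.inter_filter[symmetric])
        finally show ?thesis by simp
      qed
    qed simp
    also have "\<dots> = (\<Sum>s\<in>{1..T}. (\<Sum>t=1..T. (if s \<le> t then q ^ (t - s) else 0)) / \<delta> * c s)"
      by (subst sum.swap) (auto simp: sum_distrib_right sum_divide_distrib intro!: sum.cong)
    also have "\<dots> \<le> (\<Sum>s\<in>{1..T}. (1 / \<delta>) / \<delta> * c s)"
    proof (rule sum_mono)
      fix s assume s: "s \<in> {1..T}"
      have "{t\<in>{1..T}. s \<le> t} = {s..T}" using s by auto
      hence "(\<Sum>t=1..T. (if s \<le> t then q ^ (t - s) else 0)) = (\<Sum>t=s..T. q ^ (t - s))"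
        by (simp add: sum.inter_filter[symmetric])
      also have "\<dots> \<le> 1 / \<delta>"
        by (intro geo_bound2[OF q0 q_def assms(1)]) (auto simp: inj_on_def)
      finally have "(\<Sum>t=1..T. (if s \<le> t then q ^ (t - s) else 0)) / \<delta> \<le> (1 / \<delta>) / \<delta>"
        using assms(1) by (metis divide_right_mono less_imp_le)
      thus "(\<Sum>t=1..T. (if s \<le> t then q ^ (t - s) else 0)) / \<delta> * c s \<le> (1 / \<delta>) / \<delta> * c s"
        using c0[of s] s by (metis atLeastAtMost_iff mult_right_mono)
    qed
    also have "\<dots> = (1 / \<delta>\<^sup>2) * (\<Sum>s=1..T. c s)"
      by (simp add: sum_distrib_left power2_eq_square)
    finally show ?thesis .
  qed
  have integ: "f integrable_on {x..y}" if "0 \<le> x" for x y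
  proof -
    have "mono_on {x..y} (\<lambda>z. - f z)"
      using that assms(5) by (auto intro!: mono_onI)
    hence "(\<lambda>z. - f z) integrable_on {x..y}" by (rule integrable_on_mono_on)
    hence "(\<lambda>z. - (- f z)) integrable_on {x..y}" by (rule integrable_neg)
    thus ?thesis by simp
  qed
  have stepC: "n \<le> T \<Longrightarrow> (\<Sum>s=1..n. c s) \<le> integral {a 0..A n} f" for n
  proof (induction n)
    case 0 thus ?case by (simp add: A_def)
  next
    case (Suc n)
    have a00: "0 \<le> a 0" using assms(3) by simp
    have le1: "a 0 \<le> A n" using Amono[of 0 n] Suc by (simp add: A_def)
    have le2: "A n \<le> A (Suc n)" using Amono[of n "Suc n"] Suc by simp
    have AS: "A (Suc n) = A n + a (Suc n)" by (simp add: A_def)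
    have "c (Suc n) \<le> integral {A n..A (Suc n)} f"
    proof -
      have "integral {A n..A (Suc n)} (\<lambda>_. f (A (Suc n))) \<le> integral {A n..A (Suc n)} f"
      proof (rule integral_le)
        have An: "0 \<le> A n" using A0 Suc.prems by simp
        show "(\<lambda>_. f (A (Suc n))) integrable_on {A n..A (Suc n)}" by (rule integrable_const_ivl)
        show "f integrable_on {A n..A (Suc n)}" using integ An by simp
        show "f (A (Suc n)) \<le> f x" if "x \<in> {A n..A (Suc n)}" for x
          using assms(5) An that by (meson atLeastAtMost_iff order_trans)
      qed
      thus ?thesis using le2 AS by (simp add: c_def mult.commute)
    qed
    moreover have "integral {a 0..A n} f + integral {A n..A (Suc n)} f = integral {a 0..A (Suc n)} f"
      by (rule Henstock_Kurzweil_Integration.integral_combine[OF le1 le2 integ[OF a00]])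
    ultimately show ?case using Suc by simp
  qed
  have "(\<Sum>t=1..T. \<Sum>i=0..t-1. (1 - \<delta>) ^ i * (\<Sum>s=t-i..t. a s) * f (\<Sum>s=0..t. a s))
      = (\<Sum>t=1..T. \<Sum>i=0..t-1. q ^ i * (\<Sum>s=t-i..t. a s) * f (A t))"
    by (simp add: q_def A_def)
  also have "\<dots> \<le> (\<Sum>t=1..T. \<Sum>s=1..t. (q ^ (t - s) / \<delta>) * c s)"
    by (rule sum_mono) (use stepA in auto)
  also have "\<dots> \<le> (1 / \<delta>\<^sup>2) * (\<Sum>s=1..T. c s)" by (rule stepB)
  also have "\<dots> \<le> (1 / \<delta>\<^sup>2) * integral {a 0..A T} f"
    by (rule mult_left_mono) (use stepC in auto)
  finally show ?thesis by (simp add: A_def)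
qed

end
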